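(* Let $A,B,C,D,E,F$ be six pairwise distinct points of $\mathbb{R}^3$, no four of which are coplanar, and let $X^*,Y^*\in\mathbb{R}^3\setminus\{A,\dots,F\}$. Consider the system of six equations in unknowns $X,Y\in\mathbb{R}^3$ $$\frac{1}{\|X-T\|^2}+\frac{1}{\|Y-T\|^2}=\frac{1}{\|X^*-T\|^2}+\frac{1}{\|Y^*-T\|^2},\qquad T\in\{A,B,C,D,E,F\}.$$ Then every solution $(X_P,Y_P)$ of this system is uniquely determined by $Y_P$: if $(X_P,Y_P)$ and $(X_Q,Y_P)$ are both solutions, then $X_P=X_Q$.
   Context: $\|\cdot\|$ is the Euclidean norm on $\mathbb{R}^3$. *)

theory Defs
  imports "HOL-Analysis.Analysis"
begin

end

theory Submission
  imports Defs
begin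

lemma coplanar_aff_dim2:
  fixes S :: "'a::euclidean_space set"
  assumes "aff_dim S \<le> 2" shows "coplanar S"
proof -
  obtain B where "B \<subseteq> S" and B: "\<not> affine_dependent B" "affine hull S = affine hull B"
    using affine_basis_exists [of S] by auto
  then have "aff_dim B \<le> 2" using assms by (metis aff_dim_affine_hull)
  then have "finite B" "card B \<le> 3"
    using B by (auto simp: affine_independent_iff_card)
  then have "coplanar B" by (rule coplanar_small)
  then show "coplanar S"
    by (metis B(2) coplanar_affine_hull_coplanar)
qed

lemma eqdist_imp:
  fixes X Y T :: "real^3"
  assumes "norm (X - T) = norm (Y - T)"
  shows "(X - Y) \<bullet> T = (X \<bullet> X - Y \<bullet> Y) / 2"
proof -
  have "(X - T) \<bullet> (X - T) = (Y - T) \<bullet> (Y - T)"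
    using assms by (metis norm_eq)
  then show ?thesis by (simp add: algebra_simps inner_commute)
qed

lemma inv_sq_eq:
  fixes X Y T :: "real^3"
  assumes "X \<noteq> T" "Y \<noteq> T" "1 / (norm (X - T))\<^sup>2 = 1 / (norm (Y - T))\<^sup>2"
  shows "norm (X - T) = norm (Y - T)"
proof -
  have "(norm (X - T))\<^sup>2 = (norm (Y - T))\<^sup>2" using assms by (simp add: field_simps)
  then show ?thesis by (simp add: power2_eq_iff_nonneg)
qed

theorem lemma1:
  fixes A B C D E F Xs Ys XP XQ YP :: "real^3"
  assumes distinct: "distinct [A, B, C, D, E, F]"
    and no_four_coplanar:
      "\<forall>S. S \<subseteq> {A, B, C, D, E, F} \<and> card S = 4 \<longrightarrow> \<not> coplanar S"
    and Xs: "Xs \<notin> {A, B, C, D, E, F}" and Ys: "Ys \<notin> {A, B, C, D, E, F}"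
    and XP: "XP \<notin> {A, B, C, D, E, F}" and XQ: "XQ \<notin> {A, B, C, D, E, F}"
    and YP: "YP \<notin> {A, B, C, D, E, F}"
    and solP: "\<forall>T\<in>{A, B, C, D, E, F}.
        1 / (norm (XP - T))\<^sup>2 + 1 / (norm (YP - T))\<^sup>2
      = 1 / (norm (Xs - T))\<^sup>2 + 1 / (norm (Ys - T))\<^sup>2"
    and solQ: "\<forall>T\<in>{A, B, C, D, E, F}.
        1 / (norm (XQ - T))\<^sup>2 + 1 / (norm (YP - T))\<^sup>2
      = 1 / (norm (Xs - T))\<^sup>2 + 1 / (norm (Ys - T))\<^sup>2"
  shows "XP = XQ"
proof (rule ccontr)
  assume ne: "XP \<noteq> XQ"
  define H where "H = {x. (XP - XQ) \<bullet> x = (XP \<bullet> XP - XQ \<bullet> XQ) / 2}"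
  have sub: "{A, B, C, D} \<subseteq> H"
  proof
    fix T assume T: "T \<in> {A, B, C, D}"
    then have TT: "T \<in> {A, B, C, D, E, F}" by auto
    have e: "1 / (norm (XP - T))\<^sup>2 = 1 / (norm (XQ - T))\<^sup>2"
      using solP[rule_format, OF TT] solQ[rule_format, OF TT] by linarith
    have "XP \<noteq> T" "XQ \<noteq> T" using XP XQ TT by auto
    then have "norm (XP - T) = norm (XQ - T)" using e by (intro inv_sq_eq)
    then show "T \<in> H" unfolding H_def using eqdist_imp by auto
  qed
  have "aff_dim H = 2" unfolding H_def using ne
    by (subst aff_dim_hyperplane) auto
  then have "aff_dim {A, B, C, D} \<le> 2" using aff_dim_subset[OF sub] by simp
  then have "coplanar {A, B, C, D}" by (rule coplanar_aff_dim2)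
  moreover have "card {A, B, C, D} = 4" using distinct by auto
  ultimately show False using no_four_coplanar by auto
qed

end
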